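(* Let $K$ be a Markov kernel on a finite set $V$ and $\mu$ a probability measure on $V$ such that $\mu'=\mu K$ is positive. Let $P=K^*_\mu K_\mu$ acting on $\ell^2(\mu')$ and let $l(P)$ be its logarithmic Sobolev constant. Then for all $q_0\ge2$ and all $q\le[1+l(P)]q_0$, \[\|K\|_{\ell^{q_0}(\mu')\to\ell^q(\mu)}\le1.\]
   Context: $K$ acts on functions by $Kf(x)=\sum_yK(x,y)f(y)$; $K_\mu$ denotes $K$ viewed as an operator $\ell^2(\mu')\to\ell^2(\mu)$, whose adjoint $K_\mu^*:\ell^2(\mu)\to\ell^2(\mu')$ has kernel $K^*_\mu(x,y)=K(y,x)\mu(y)/\mu'(x)$; thus $P(x,y)=\frac{1}{\mu'(x)}\sum_z\mu(z)K(z,x)K(z,y)$, reversible with respect to $\mu'$. $\|f\|_{\ell^p(\nu)}=(\sum_x|f(x)|^p\nu(x))^{1/p}$, and $\|A\|_{\ell^p(\nu)\to\ell^q(\nu')}=\sup\{\|Af\|_{\ell^q(\nu')}:\|f\|_{\ell^p(\nu)}\le1\}$. $\mathcal E_{P,\mu'}(f,f)=\frac12\sum_{x,y}|f(x)-f(y)|^2\mu'(x)P(x,y)$, $\mathcal L(f^2,\nu)=\sum_xf(x)^2\log\bigl(f(x)^2/\|f\|^2_{\ell^2(\nu)}\bigr)\nu(x)$, and $l(P)=\inf\{\mathcal E_{P,\mu'}(f,f)/\mathcal L(f^2,\mu'):\mathcal L(f^2,\mu')\ne0,\ f\text{ nonconstant}\}$. *)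

theory Defs
  imports "HOL-Analysis.Analysis"
begin

definition markov_kernel :: "('v::finite \<Rightarrow> 'v \<Rightarrow> real) \<Rightarrow> bool" where
  "markov_kernel K \<longleftrightarrow> (\<forall>x y. 0 \<le> K x y) \<and> (\<forall>x. (\<Sum>y\<in>UNIV. K x y) = 1)"

definition prob_measure_fin :: "('v::finite \<Rightarrow> real) \<Rightarrow> bool" where
  "prob_measure_fin \<mu> \<longleftrightarrow> (\<forall>x. 0 \<le> \<mu> x) \<and> (\<Sum>x\<in>UNIV. \<mu> x) = 1"

definition push_measure :: "('v::finite \<Rightarrow> real) \<Rightarrow> ('v \<Rightarrow> 'v \<Rightarrow> real) \<Rightarrow> 'v \<Rightarrow> real" where
  "push_measure \<mu> K y = (\<Sum>x\<in>UNIV. \<mu> x * K x y)"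

definition kernel_apply :: "('v::finite \<Rightarrow> 'v \<Rightarrow> real) \<Rightarrow> ('v \<Rightarrow> real) \<Rightarrow> 'v \<Rightarrow> real" where
  "kernel_apply K f x = (\<Sum>y\<in>UNIV. K x y * f y)"

definition adjoint_kernel :: "('v::finite \<Rightarrow> 'v \<Rightarrow> real) \<Rightarrow> ('v \<Rightarrow> real) \<Rightarrow> 'v \<Rightarrow> 'v \<Rightarrow> real" where
  "adjoint_kernel K \<mu> x y = K y x * \<mu> y / push_measure \<mu> K x"

definition P_kernel :: "('v::finite \<Rightarrow> 'v \<Rightarrow> real) \<Rightarrow> ('v \<Rightarrow> real) \<Rightarrow> 'v \<Rightarrow> 'v \<Rightarrow> real" where
  "P_kernel K \<mu> x y = (\<Sum>z\<in>UNIV. adjoint_kernel K \<mu> x z * K z y)"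

definition lp_norm :: "real \<Rightarrow> ('v::finite \<Rightarrow> real) \<Rightarrow> ('v \<Rightarrow> real) \<Rightarrow> real" where
  "lp_norm p \<nu> f = (\<Sum>x\<in>UNIV. \<bar>f x\<bar> powr p * \<nu> x) powr (1 / p)"

definition op_norm :: "('v::finite \<Rightarrow> 'v \<Rightarrow> real) \<Rightarrow> real \<Rightarrow> ('v \<Rightarrow> real) \<Rightarrow> real \<Rightarrow> ('v \<Rightarrow> real) \<Rightarrow> real" where
  "op_norm A p \<nu> q \<nu>' = Sup {lp_norm q \<nu>' (kernel_apply A f) | f. lp_norm p \<nu> f \<le> 1}"

definition dirichlet_form :: "('v::finite \<Rightarrow> 'v \<Rightarrow> real) \<Rightarrow> ('v \<Rightarrow> real) \<Rightarrow> ('v \<Rightarrow> real) \<Rightarrow> real" where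
  "dirichlet_form P \<nu> f = (1/2) * (\<Sum>x\<in>UNIV. \<Sum>y\<in>UNIV. \<bar>f x - f y\<bar>^2 * \<nu> x * P x y)"

definition entropy_like :: "('v::finite \<Rightarrow> real) \<Rightarrow> ('v \<Rightarrow> real) \<Rightarrow> real" where
  "entropy_like f \<nu> = (\<Sum>x\<in>UNIV. (f x)^2 * ln ((f x)^2 / (lp_norm 2 \<nu> f)^2) * \<nu> x)"

definition log_sobolev_const :: "('v::finite \<Rightarrow> 'v \<Rightarrow> real) \<Rightarrow> ('v \<Rightarrow> real) \<Rightarrow> real" where
  "log_sobolev_const P \<nu> = Inf {dirichlet_form P \<nu> f / entropy_like f \<nu> | f.
      entropy_like f \<nu> \<noteq> 0 \<and> (\<exists>x y. f x \<noteq> f y)}"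

end

theory Submission
  imports Defs
begin

lemma pw_tan:
  fixes x t :: real
  assumes "0 \<le> x" "0 \<le> t" "t \<le> 1"
  shows "x powr t \<le> 1 + t * (x - 1)"
proof (cases "x = 0")
  case True then show ?thesis using assms by simp
next
  case False
  have "x powr t * 1 powr (1 - t) \<le> t * x + (1 - t) * 1"
    using Youngs_inequality_0[of t "1 - t" x 1] assms False by simp
  then show ?thesis by (simp add: algebra_simps)
qed

lemma pw_tan2:
  fixes y s :: real
  assumes "0 \<le> y" "1 \<le> s"
  shows "1 + s * (y - 1) \<le> y powr s"
proof -
  have "(y powr s) powr (1/s) \<le> 1 + (1/s) * (y powr s - 1)"
    by (rule pw_tan) (use assms in auto)
  moreover have "(y powr s) powr (1/s) = y" using assms by (simp add: powr_powr)
  ultimately have "y \<le> 1 + (1/s) * (y powr s - 1)" by simp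
  then have "s * y \<le> s * (1 + (1/s) * (y powr s - 1))" using assms by simp
  also have "\<dots> = s + (y powr s - 1)" using assms by (simp add: algebra_simps)
  finally show ?thesis by (simp add: algebra_simps)
qed

lemma jensen_pow:
  fixes w z :: "'a \<Rightarrow> real" and S :: "'a set"
  assumes "finite S" "\<And>i. i \<in> S \<Longrightarrow> 0 \<le> w i" "(\<Sum>i\<in>S. w i) = 1"
    "\<And>i. i \<in> S \<Longrightarrow> 0 \<le> z i" "1 \<le> s"
  shows "(\<Sum>i\<in>S. w i * z i) powr s \<le> (\<Sum>i\<in>S. w i * z i powr s)"
proof -
  define c where "c = (\<Sum>i\<in>S. w i * z i)"
  have c0: "0 \<le> c" unfolding c_def using assms by (auto intro: sum_nonneg)
  show ?thesis
  proof (cases "c = 0")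
    case True then show ?thesis using assms by (simp add: c_def[symmetric] sum_nonneg)
  next
    case False
    then have cp: "0 < c" using c0 by simp
    have "1 = (\<Sum>i\<in>S. w i * (1 + s * (z i / c - 1)))"
    proof -
      have "(\<Sum>i\<in>S. w i * (1 + s * (z i / c - 1))) = (\<Sum>i\<in>S. w i) + s / c * (\<Sum>i\<in>S. w i * z i) - s * (\<Sum>i\<in>S. w i)"
        by (simp add: algebra_simps sum.distrib sum_subtractf sum_distrib_left)
      also have "\<dots> = 1" using assms cp by (simp add: c_def[symmetric])
      finally show ?thesis by simp
    qed
    also have "\<dots> \<le> (\<Sum>i\<in>S. w i * (z i / c) powr s)"
      by (rule sum_mono, rule mult_left_mono, rule pw_tan2) (use assms cp in auto)
    also have "\<dots> = (\<Sum>i\<in>S. w i * z i powr s) / c powr s"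
      using assms cp by (simp add: powr_divide sum_divide_distrib)
    finally have "c powr s \<le> (\<Sum>i\<in>S. w i * z i powr s)" using cp by (simp add: field_simps)
    then show ?thesis by (simp add: c_def)
  qed
qed

lemma jensen_exp:
  fixes w y :: "'a \<Rightarrow> real" and S :: "'a set"
  assumes "finite S" "\<And>i. i \<in> S \<Longrightarrow> 0 \<le> w i" "(\<Sum>i\<in>S. w i) = 1"
  shows "exp (\<Sum>i\<in>S. w i * y i) \<le> (\<Sum>i\<in>S. w i * exp (y i))"
proof -
  define c where "c = (\<Sum>i\<in>S. w i * y i)"
  have "exp c = (\<Sum>i\<in>S. w i * (exp c * (1 + (y i - c))))"
  proof -
    have "(\<Sum>i\<in>S. w i * (exp c * (1 + (y i - c)))) = exp c * ((\<Sum>i\<in>S. w i) + (\<Sum>i\<in>S. w i * y i) - c * (\<Sum>i\<in>S. w i))"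
      by (simp add: algebra_simps sum.distrib sum_subtractf sum_distrib_left)
    also have "\<dots> = exp c" using assms by (simp add: c_def)
    finally show ?thesis by simp
  qed
  also have "\<dots> \<le> (\<Sum>i\<in>S. w i * exp (y i))"
  proof (rule sum_mono, rule mult_left_mono)
    fix i
    have "exp c * (1 + (y i - c)) \<le> exp c * exp (y i - c)"
      by (rule mult_left_mono) (auto simp: exp_ge_add_one_self)
    then show "exp c * (1 + (y i - c)) \<le> exp (y i)" by (simp add: exp_diff)
  qed (use assms in auto)
  finally show ?thesis by (simp add: c_def)
qed

lemma push_sum:
  "(\<Sum>x\<in>UNIV. \<mu> x * kernel_apply K h x) = (\<Sum>y\<in>UNIV. push_measure \<mu> K y * h y)"
proof -
  have "(\<Sum>x\<in>UNIV. \<mu> x * kernel_apply K h x) = (\<Sum>x\<in>UNIV. \<Sum>y\<in>UNIV. \<mu> x * K x y * h y)"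
    by (simp add: kernel_apply_def sum_distrib_left mult.assoc)
  also have "\<dots> = (\<Sum>y\<in>UNIV. \<Sum>x\<in>UNIV. \<mu> x * K x y * h y)" by (rule sum.swap)
  also have "\<dots> = (\<Sum>y\<in>UNIV. push_measure \<mu> K y * h y)"
    by (simp add: push_measure_def sum_distrib_right)
  finally show ?thesis .
qed

lemma push_total:
  assumes "markov_kernel K" "prob_measure_fin \<mu>"
  shows "(\<Sum>y\<in>UNIV. push_measure \<mu> K y) = 1"
proof -
  have "(\<Sum>y\<in>UNIV. push_measure \<mu> K y) = (\<Sum>y\<in>UNIV. push_measure \<mu> K y * 1)" by simp
  also have "\<dots> = (\<Sum>x\<in>UNIV. \<mu> x * kernel_apply K (\<lambda>_. 1) x)" by (rule push_sum[symmetric])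
  also have "\<dots> = 1" using assms by (simp add: kernel_apply_def markov_kernel_def prob_measure_fin_def)
  finally show ?thesis .
qed

lemma per_z:
  assumes "markov_kernel K"
  shows "(1/2) * (\<Sum>x\<in>UNIV. \<Sum>y\<in>UNIV. K z x * K z y * (\<phi> x - \<phi> y)^2)
     = (\<Sum>x\<in>UNIV. K z x * \<phi> x ^ 2) - (kernel_apply K \<phi> z)^2"
proof -
  have K1: "(\<Sum>y\<in>UNIV. K z y) = 1" using assms by (simp add: markov_kernel_def)
  have e: "\<And>x y. K z x * K z y * (\<phi> x - \<phi> y)^2 = K z y * (K z x * \<phi> x ^ 2) + K z x * (K z y * \<phi> y ^ 2) - 2 * ((K z x * \<phi> x) * (K z y * \<phi> y))"
    by (simp add: power2_eq_square algebra_simps)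
  have "(\<Sum>x\<in>UNIV. \<Sum>y\<in>UNIV. K z x * K z y * (\<phi> x - \<phi> y)^2)
     = (\<Sum>x\<in>UNIV. \<Sum>y\<in>UNIV. K z y * (K z x * \<phi> x ^ 2)) + (\<Sum>x\<in>UNIV. \<Sum>y\<in>UNIV. K z x * (K z y * \<phi> y ^ 2))
       - 2 * (\<Sum>x\<in>UNIV. \<Sum>y\<in>UNIV. (K z x * \<phi> x) * (K z y * \<phi> y))"
    by (simp only: e sum.distrib sum_subtractf sum_distrib_left[symmetric])
  also have "\<dots> = 2 * (\<Sum>x\<in>UNIV. K z x * \<phi> x ^ 2) - 2 * (kernel_apply K \<phi> z)^2"
  proof -
    have 1: "(\<Sum>x\<in>UNIV. \<Sum>y\<in>UNIV. K z y * (K z x * \<phi> x ^ 2)) = (\<Sum>x\<in>UNIV. K z x * \<phi> x ^ 2)"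
      by (simp add: sum_distrib_right[symmetric] K1)
    have 2: "(\<Sum>x\<in>UNIV. \<Sum>y\<in>UNIV. K z x * (K z y * \<phi> y ^ 2)) = (\<Sum>x\<in>UNIV. K z x * \<phi> x ^ 2)"
      by (simp add: sum_distrib_left[symmetric] sum_distrib_right[symmetric] K1)
    have 3: "(\<Sum>x\<in>UNIV. \<Sum>y\<in>UNIV. (K z x * \<phi> x) * (K z y * \<phi> y)) = (kernel_apply K \<phi> z)^2"
      by (simp add: sum_product[symmetric] kernel_apply_def power2_eq_square)
    show ?thesis by (simp only: 1 2 3)
  qed
  finally show ?thesis by simp
qed

lemma dirichlet_id:
  assumes "markov_kernel K" "\<forall>y. push_measure \<mu> K y > 0"
  shows "dirichlet_form (P_kernel K \<mu>) (push_measure \<mu> K) \<phi>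
     = (\<Sum>y\<in>UNIV. push_measure \<mu> K y * \<phi> y ^ 2) - (\<Sum>x\<in>UNIV. \<mu> x * (kernel_apply K \<phi> x)^2)"
proof -
  have mP: "push_measure \<mu> K x * P_kernel K \<mu> x y = (\<Sum>z\<in>UNIV. \<mu> z * (K z x * K z y))" for x y
    using assms(2)[rule_format, of x]
    by (simp add: P_kernel_def adjoint_kernel_def sum_distrib_left field_simps)
  have "dirichlet_form (P_kernel K \<mu>) (push_measure \<mu> K) \<phi>
     = (1/2) * (\<Sum>x\<in>UNIV. \<Sum>y\<in>UNIV. \<Sum>z\<in>UNIV. \<mu> z * (K z x * K z y * (\<phi> x - \<phi> y)^2))"
  proof -
    have "\<bar>\<phi> x - \<phi> y\<bar>^2 * push_measure \<mu> K x * P_kernel K \<mu> x y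
        = (\<Sum>z\<in>UNIV. \<mu> z * (K z x * K z y * (\<phi> x - \<phi> y)^2))" for x y
    proof -
      have "\<bar>\<phi> x - \<phi> y\<bar>^2 * push_measure \<mu> K x * P_kernel K \<mu> x y
          = (\<phi> x - \<phi> y)^2 * (push_measure \<mu> K x * P_kernel K \<mu> x y)" by simp
      also have "\<dots> = (\<Sum>z\<in>UNIV. (\<phi> x - \<phi> y)^2 * (\<mu> z * (K z x * K z y)))"
        by (simp only: mP sum_distrib_left)
      also have "\<dots> = (\<Sum>z\<in>UNIV. \<mu> z * (K z x * K z y * (\<phi> x - \<phi> y)^2))"
        by (rule sum.cong[OF refl]) (simp only: mult.commute mult.left_commute)
      finally show ?thesis .
    qed
    then show ?thesis unfolding dirichlet_form_def by simp
  qed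
  also have "\<dots> = (1/2) * (\<Sum>z\<in>UNIV. \<mu> z * (\<Sum>x\<in>UNIV. \<Sum>y\<in>UNIV. K z x * K z y * (\<phi> x - \<phi> y)^2))"
  proof -
    have "(\<Sum>x\<in>UNIV. \<Sum>y\<in>UNIV. \<Sum>z\<in>UNIV. \<mu> z * (K z x * K z y * (\<phi> x - \<phi> y)^2))
        = (\<Sum>x\<in>UNIV. \<Sum>z\<in>UNIV. \<Sum>y\<in>UNIV. \<mu> z * (K z x * K z y * (\<phi> x - \<phi> y)^2))"
      by (rule sum.cong[OF refl], rule sum.swap)
    also have "\<dots> = (\<Sum>z\<in>UNIV. \<Sum>x\<in>UNIV. \<Sum>y\<in>UNIV. \<mu> z * (K z x * K z y * (\<phi> x - \<phi> y)^2))"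
      by (rule sum.swap)
    also have "\<dots> = (\<Sum>z\<in>UNIV. \<mu> z * (\<Sum>x\<in>UNIV. \<Sum>y\<in>UNIV. K z x * K z y * (\<phi> x - \<phi> y)^2))"
      by (simp add: sum_distrib_left)
    finally show ?thesis by simp
  qed
  also have "\<dots> = (\<Sum>z\<in>UNIV. \<mu> z * ((1/2) * (\<Sum>x\<in>UNIV. \<Sum>y\<in>UNIV. K z x * K z y * (\<phi> x - \<phi> y)^2)))"
    by (simp add: sum_distrib_left algebra_simps)
  also have "\<dots> = (\<Sum>z\<in>UNIV. \<mu> z * ((\<Sum>x\<in>UNIV. K z x * \<phi> x ^ 2) - (kernel_apply K \<phi> z)^2))"
    by (simp only: per_z[OF assms(1)])
  also have "\<dots> = (\<Sum>z\<in>UNIV. \<mu> z * kernel_apply K (\<lambda>x. \<phi> x ^ 2) z) - (\<Sum>x\<in>UNIV. \<mu> x * (kernel_apply K \<phi> x)^2)"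
    by (simp add: right_diff_distrib sum_subtractf kernel_apply_def)
  also have "\<dots> = (\<Sum>y\<in>UNIV. push_measure \<mu> K y * \<phi> y ^ 2) - (\<Sum>x\<in>UNIV. \<mu> x * (kernel_apply K \<phi> x)^2)"
    by (simp add: push_sum)
  finally show ?thesis .
qed

lemma abs_powr2: "\<bar>a::real\<bar> powr 2 = a^2" by (simp add: powr_numeral)

lemma norm2_sq:
  assumes "\<forall>x. 0 \<le> \<nu> x"
  shows "(lp_norm 2 \<nu> f)^2 = (\<Sum>x\<in>UNIV. f x ^ 2 * \<nu> x)"
proof -
  have nn: "0 \<le> (\<Sum>x\<in>UNIV. f x ^ 2 * \<nu> x)" using assms by (auto intro: sum_nonneg)
  have "lp_norm 2 \<nu> f = sqrt (\<Sum>x\<in>UNIV. f x ^ 2 * \<nu> x)"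
    unfolding lp_norm_def using nn by (simp add: abs_powr2 powr_half_sqrt)
  then show ?thesis using nn by simp
qed

lemma ent_nonneg:
  assumes "\<forall>x. 0 \<le> \<nu> x" "(\<Sum>x\<in>UNIV. \<nu> x) = 1"
  shows "0 \<le> entropy_like f \<nu>"
proof -
  define m where "m = (\<Sum>x\<in>UNIV. f x ^ 2 * \<nu> x)"
  have m0: "0 \<le> m" unfolding m_def using assms by (auto intro: sum_nonneg)
  have E: "entropy_like f \<nu> = (\<Sum>x\<in>UNIV. f x ^ 2 * ln (f x ^ 2 / m) * \<nu> x)"
    unfolding entropy_like_def norm2_sq[OF assms(1)] m_def ..
  have t: "(f x ^ 2 - m) * \<nu> x \<le> f x ^ 2 * ln (f x ^ 2 / m) * \<nu> x" for x
  proof (cases "f x = 0 \<or> \<nu> x = 0")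
    case True then show ?thesis using m0 assms by auto
  next
    case False
    then have fx: "0 < f x ^ 2" and nx: "0 < \<nu> x" using assms by (auto simp: less_le)
    have "f x ^ 2 * \<nu> x \<le> m" unfolding m_def
      by (rule member_le_sum) (use assms in auto)
    then have mp: "0 < m" using fx nx by (smt (verit) mult_pos_pos)
    have "ln (m / f x ^ 2) \<le> m / f x ^ 2 - 1" by (rule ln_le_minus_one) (use mp fx in auto)
    moreover have "ln (m / f x ^ 2) = - ln (f x ^ 2 / m)" using mp fx by (simp add: ln_div)
    ultimately have "1 - m / f x ^ 2 \<le> ln (f x ^ 2 / m)" by simp
    then have "f x ^ 2 * (1 - m / f x ^ 2) \<le> f x ^ 2 * ln (f x ^ 2 / m)"
      using fx by (simp add: mult_left_mono)
    then have "f x ^ 2 - m \<le> f x ^ 2 * ln (f x ^ 2 / m)" using fx by (simp add: algebra_simps)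
    then show ?thesis using nx by (simp add: mult_right_mono)
  qed
  have "(\<Sum>x\<in>UNIV. (f x ^ 2 - m) * \<nu> x) = m - m * (\<Sum>x\<in>UNIV. \<nu> x)"
    by (simp add: left_diff_distrib sum_subtractf sum_distrib_left m_def)
  then have "(\<Sum>x\<in>UNIV. (f x ^ 2 - m) * \<nu> x) = 0" using assms by simp
  then show ?thesis unfolding E using sum_mono[of UNIV "\<lambda>x. (f x ^ 2 - m) * \<nu> x", OF t] by simp
qed

lemma E_nonneg:
  assumes "markov_kernel K" "prob_measure_fin \<mu>" "\<forall>y. push_measure \<mu> K y > 0"
  shows "0 \<le> dirichlet_form (P_kernel K \<mu>) (push_measure \<mu> K) \<phi>"
proof -
  have P: "0 \<le> P_kernel K \<mu> x y" for x y
    unfolding P_kernel_def adjoint_kernel_def using assms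
    by (auto intro!: sum_nonneg mult_nonneg_nonneg divide_nonneg_pos simp: markov_kernel_def prob_measure_fin_def)
  have "0 \<le> (\<Sum>x\<in>UNIV. \<Sum>y\<in>UNIV. \<bar>\<phi> x - \<phi> y\<bar>^2 * push_measure \<mu> K x * P_kernel K \<mu> x y)"
    using assms(3) P by (intro sum_nonneg mult_nonneg_nonneg) (auto simp: less_imp_le)
  then show ?thesis unfolding dirichlet_form_def by simp
qed

lemma LS:
  assumes "markov_kernel K" "prob_measure_fin \<mu>" "\<forall>y. push_measure \<mu> K y > 0"
    and "0 < entropy_like \<phi> (push_measure \<mu> K)"
  shows "log_sobolev_const (P_kernel K \<mu>) (push_measure \<mu> K) * entropy_like \<phi> (push_measure \<mu> K)
     \<le> dirichlet_form (P_kernel K \<mu>) (push_measure \<mu> K) \<phi>"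
proof -
  let ?m = "push_measure \<mu> K"
  let ?S = "{dirichlet_form (P_kernel K \<mu>) ?m f / entropy_like f ?m | f.
      entropy_like f ?m \<noteq> 0 \<and> (\<exists>x y. f x \<noteq> f y)}"
  have mn: "\<forall>x. 0 \<le> ?m x" using assms(3) less_imp_le by blast
  have m1: "(\<Sum>x\<in>UNIV. ?m x) = 1" by (rule push_total) (use assms in auto)
  have nc: "\<exists>x y. \<phi> x \<noteq> \<phi> y"
  proof (rule ccontr)
    assume "\<not> ?thesis"
    then have c: "\<And>x. \<phi> x = \<phi> undefined" by metis
    have "entropy_like \<phi> ?m = 0"
      unfolding entropy_like_def norm2_sq[OF mn]
      by (subst c, subst (2) c, simp add: sum_distrib_left[symmetric] m1)
    then show False using assms(4) by simp
  qed
  have mem: "dirichlet_form (P_kernel K \<mu>) ?m \<phi> / entropy_like \<phi> ?m \<in> ?S"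
    using nc assms(4) by (intro CollectI exI[of _ \<phi>]) auto
  have bdd: "bdd_below ?S"
  proof (rule bdd_belowI[of _ 0])
    fix z assume "z \<in> ?S"
    then obtain f where "z = dirichlet_form (P_kernel K \<mu>) ?m f / entropy_like f ?m" by blast
    then show "0 \<le> z" using E_nonneg[OF assms(1-3)] ent_nonneg[OF mn m1] by simp
  qed
  have "log_sobolev_const (P_kernel K \<mu>) ?m \<le> dirichlet_form (P_kernel K \<mu>) ?m \<phi> / entropy_like \<phi> ?m"
    unfolding log_sobolev_const_def by (rule cInf_lower[OF mem bdd])
  then show ?thesis using assms(4) by (simp add: le_divide_eq)
qed

lemma beckner:
  fixes G \<nu> :: "'v::finite \<Rightarrow> real"
  assumes "\<forall>x. 0 \<le> \<nu> x" "\<forall>x. 0 \<le> G x" "0 < a"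
    and m: "m = (\<Sum>x\<in>UNIV. G x * \<nu> x)" "0 < m"
  shows "m powr a * exp ((a - 1) * (\<Sum>x\<in>UNIV. G x * ln (G x / m) * \<nu> x) / m)
      \<le> (\<Sum>x\<in>UNIV. G x powr a * \<nu> x)"
proof -
  define w where "w x = G x * \<nu> x / m" for x
  define y where "y x = (a - 1) * ln (G x / m)" for x
  have w0: "\<And>x. 0 \<le> w x" unfolding w_def using assms by auto
  have w1: "(\<Sum>x\<in>UNIV. w x) = 1" unfolding w_def using m by (simp add: sum_divide_distrib[symmetric])
  have "(\<Sum>x\<in>UNIV. w x * y x) = (a - 1) * (\<Sum>x\<in>UNIV. G x * ln (G x / m) * \<nu> x) / m"
  proof -
    have "(\<Sum>x\<in>UNIV. w x * y x) = (\<Sum>x\<in>UNIV. ((a - 1) / m) * (G x * ln (G x / m) * \<nu> x))"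
      by (rule sum.cong) (simp_all add: w_def y_def)
    also have "\<dots> = ((a - 1) / m) * (\<Sum>x\<in>UNIV. G x * ln (G x / m) * \<nu> x)"
      by (rule sum_distrib_left[symmetric])
    finally show ?thesis by simp
  qed
  then have "exp ((a - 1) * (\<Sum>x\<in>UNIV. G x * ln (G x / m) * \<nu> x) / m) \<le> (\<Sum>x\<in>UNIV. w x * exp (y x))"
    using jensen_exp[of UNIV w y] w0 w1 by simp
  also have "\<dots> = (\<Sum>x\<in>UNIV. G x powr a * \<nu> x) / m powr a"
  proof -
    have "w x * exp (y x) = G x powr a * \<nu> x / m powr a" for x
    proof (cases "G x = 0")
      case True then show ?thesis by (simp add: w_def)
    next
      case False
      then have gp: "0 < G x / m" using assms by (simp add: less_le)
      have "exp (y x) = (G x / m) powr (a - 1)" unfolding y_def using gp False m by (simp add: powr_def)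
      then have "w x * exp (y x) = \<nu> x * ((G x / m) powr 1 * (G x / m) powr (a - 1))"
        unfolding w_def using gp assms m by simp
      also have "\<dots> = \<nu> x * (G x / m) powr a"
      proof -
        have "(G x / m) powr 1 * (G x / m) powr (a - 1) = (G x / m) powr (1 + (a - 1))"
          by (simp only: powr_add)
        then show ?thesis by simp
      qed
      also have "\<dots> = G x powr a * \<nu> x / m powr a" using assms by (simp add: powr_divide)
      finally show ?thesis .
    qed
    then show ?thesis by (simp add: sum_divide_distrib)
  qed
  finally show ?thesis using m by (simp add: field_simps)
qed

lemma abs_kernel:
  assumes "markov_kernel K"
  shows "\<bar>kernel_apply K f x\<bar> \<le> kernel_apply K (\<lambda>y. \<bar>f y\<bar>) x"
proof -
  have "\<bar>kernel_apply K f x\<bar> \<le> (\<Sum>y\<in>UNIV. \<bar>K x y * f y\<bar>)" unfolding kernel_apply_def by (rule sum_abs)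
  also have "\<dots> = kernel_apply K (\<lambda>y. \<bar>f y\<bar>) x"
    using assms by (simp add: kernel_apply_def markov_kernel_def abs_mult)
  finally show ?thesis .
qed

lemma kernel_nonneg:
  assumes "markov_kernel K" "\<forall>y. 0 \<le> h y"
  shows "0 \<le> kernel_apply K h x"
  using assms unfolding kernel_apply_def markov_kernel_def by (auto intro: sum_nonneg)

lemma jensen_kernel:
  assumes "markov_kernel K" "\<forall>y. 0 \<le> h y" "1 \<le> s"
  shows "(kernel_apply K h x) powr s \<le> kernel_apply K (\<lambda>y. h y powr s) x"
  unfolding kernel_apply_def
  by (rule jensen_pow) (use assms in \<open>auto simp: markov_kernel_def\<close>)

lemma pointwise:
  assumes "markov_kernel K" "1 \<le> s" "0 < s"
  shows "\<bar>kernel_apply K f x\<bar> powr s \<le> kernel_apply K (\<lambda>y. \<bar>f y\<bar> powr s) x"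
proof -
  have "\<bar>kernel_apply K f x\<bar> powr s \<le> (kernel_apply K (\<lambda>y. \<bar>f y\<bar>) x) powr s"
    by (rule powr_mono2) (use assms abs_kernel in auto)
  also have "\<dots> \<le> kernel_apply K (\<lambda>y. \<bar>f y\<bar> powr s) x"
    by (rule jensen_kernel) (use assms in auto)
  finally show ?thesis .
qed

lemma key_bound:
  fixes K :: "'v::finite \<Rightarrow> 'v \<Rightarrow> real" and \<mu> :: "'v \<Rightarrow> real" and q0 q :: real
  assumes mk: "markov_kernel K"
    and pm: "prob_measure_fin \<mu>"
    and pos: "\<forall>y. push_measure \<mu> K y > 0"
    and q0: "q0 \<ge> 2"
    and q: "0 < q"
    and ql: "q \<le> (1 + log_sobolev_const (P_kernel K \<mu>) (push_measure \<mu> K)) * q0"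
    and Sf: "(\<Sum>y\<in>UNIV. \<bar>f y\<bar> powr q0 * push_measure \<mu> K y) \<le> 1"
  shows "(\<Sum>x\<in>UNIV. \<bar>kernel_apply K f x\<bar> powr q * \<mu> x) \<le> 1"
proof -
  let ?m = "push_measure \<mu> K"
  let ?l = "log_sobolev_const (P_kernel K \<mu>) (push_measure \<mu> K)"
  have mu0: "\<forall>x. 0 \<le> \<mu> x" and mu1: "(\<Sum>x\<in>UNIV. \<mu> x) = 1" using pm by (auto simp: prob_measure_fin_def)
  have mn: "\<forall>x. 0 \<le> ?m x" using pos less_imp_le by blast
  show ?thesis
  proof (cases "q \<le> q0")
    case True
    define t where "t = q / q0"
    define h where "h y = \<bar>f y\<bar> powr q0" for y
    have t0: "0 \<le> t" "t \<le> 1" using True q q0 by (auto simp: t_def)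
    have h0: "\<forall>y. 0 \<le> h y" by (simp add: h_def)
    have pt: "\<bar>kernel_apply K f x\<bar> powr q \<le> 1 + t * (kernel_apply K h x - 1)" for x
    proof -
      have "\<bar>kernel_apply K f x\<bar> powr q = (\<bar>kernel_apply K f x\<bar> powr q0) powr t"
        using q0 by (simp add: powr_powr t_def)
      also have "\<dots> \<le> (kernel_apply K h x) powr t"
        unfolding h_def by (rule powr_mono2) (use t0 pointwise[OF mk, of q0] q0 in auto)
      also have "\<dots> \<le> 1 + t * (kernel_apply K h x - 1)"
        by (rule pw_tan) (use t0 kernel_nonneg[OF mk h0] in auto)
      finally show ?thesis .
    qed
    have "(\<Sum>x\<in>UNIV. \<bar>kernel_apply K f x\<bar> powr q * \<mu> x) \<le> (\<Sum>x\<in>UNIV. (1 + t * (kernel_apply K h x - 1)) * \<mu> x)"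
      by (rule sum_mono, rule mult_right_mono) (use pt mu0 in auto)
    also have "\<dots> = (\<Sum>x\<in>UNIV. \<mu> x) + t * (\<Sum>x\<in>UNIV. \<mu> x * kernel_apply K h x) - t * (\<Sum>x\<in>UNIV. \<mu> x)"
      by (simp add: algebra_simps sum.distrib sum_subtractf sum_distrib_left)
    also have "\<dots> = 1 + t * ((\<Sum>y\<in>UNIV. \<bar>f y\<bar> powr q0 * ?m y) - 1)"
      by (simp add: push_sum mu1 h_def algebra_simps)
    also have "\<dots> \<le> 1" using Sf t0 by (simp add: mult_nonneg_nonpos)
    finally show ?thesis .
  next
    case False
    then have qq: "q0 < q" by simp
    define s where "s = q / 2"
    define \<phi> where "\<phi> y = \<bar>f y\<bar> powr s" for y
    define a where "a = q0 / q"
    define c where "c = q / q0 - 1"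
    have s1: "1 \<le> s" using qq q0 by (simp add: s_def)
    have a0: "0 < a" "a < 1" using qq q0 by (auto simp: a_def)
    have c0: "0 < c" using qq q0 by (simp add: c_def)
    have cl: "c \<le> ?l" using ql q0 by (simp add: c_def field_simps)
    have phi0: "\<forall>y. 0 \<le> \<phi> y" by (simp add: \<phi>_def)
    have Kphi0: "0 \<le> kernel_apply K \<phi> x" for x by (rule kernel_nonneg[OF mk phi0])
    have pt: "\<bar>kernel_apply K f x\<bar> powr q \<le> (kernel_apply K \<phi> x)^2" for x
    proof -
      have "\<bar>kernel_apply K f x\<bar> powr q = (\<bar>kernel_apply K f x\<bar> powr s) powr 2"
        by (simp add: powr_powr s_def)
      also have "\<dots> \<le> (kernel_apply K \<phi> x) powr 2"
        unfolding \<phi>_def by (rule powr_mono2) (use s1 pointwise[OF mk, of s] in auto)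
      also have "\<dots> = (kernel_apply K \<phi> x)^2" using Kphi0[of x] by (simp add: powr_numeral)
      finally show ?thesis .
    qed
    define G where "G y = \<phi> y ^ 2" for y
    define m where "m = (\<Sum>y\<in>UNIV. G y * ?m y)"
    define E where "E = dirichlet_form (P_kernel K \<mu>) ?m \<phi>"
    have E0: "0 \<le> E" unfolding E_def by (rule E_nonneg[OF mk pm pos])
    have G0: "\<forall>y. 0 \<le> G y" by (simp add: G_def)
    have Ga: "G y powr a = \<bar>f y\<bar> powr q0" for y
    proof -
      have "G y = \<bar>f y\<bar> powr (s * 2)" unfolding G_def \<phi>_def
        by (simp add: powr_powr[symmetric] powr_numeral)
      then show ?thesis using q q0 by (simp add: powr_powr a_def s_def)
    qed
    have "(\<Sum>x\<in>UNIV. \<bar>kernel_apply K f x\<bar> powr q * \<mu> x) \<le> (\<Sum>x\<in>UNIV. \<mu> x * (kernel_apply K \<phi> x)^2)"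
      by (rule sum_mono) (use pt mu0 in \<open>auto simp: mult.commute intro: mult_left_mono\<close>)
    also have "\<dots> = m - E"
      unfolding E_def m_def G_def dirichlet_id[OF mk pos] by (simp add: mult.commute)
    also have "m - E \<le> 1"
    proof (cases "m = 0")
      case True then show ?thesis using E0 by simp
    next
      case False
      then have mp: "0 < m" using G0 mn unfolding m_def by (simp add: less_le sum_nonneg)
      define Ent where "Ent = entropy_like \<phi> ?m"
      have Ent_eq: "Ent = (\<Sum>x\<in>UNIV. G x * ln (G x / m) * ?m x)"
        unfolding Ent_def entropy_like_def norm2_sq[OF mn] m_def G_def by (simp add: mult.commute)
      have "m powr a * exp ((a - 1) * Ent / m) \<le> (\<Sum>x\<in>UNIV. G x powr a * ?m x)"
        unfolding Ent_eq by (rule beckner) (use mn G0 a0 mp m_def in auto)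
      also have "\<dots> \<le> 1" using Sf by (simp add: Ga)
      finally have b1: "m powr a * exp ((a - 1) * Ent / m) \<le> 1" .
      have "(m powr a * exp ((a - 1) * Ent / m)) powr (1 / a) \<le> 1 powr (1 / a)"
        by (rule powr_mono2) (use b1 a0 in auto)
      moreover have "(m powr a * exp ((a - 1) * Ent / m)) powr (1 / a) = m * exp (- c * Ent / m)"
      proof -
        have "(m powr a * exp ((a - 1) * Ent / m)) powr (1 / a)
            = (m powr a) powr (1 / a) * exp ((a - 1) * Ent / m) powr (1 / a)"
          using mp by (simp add: powr_mult)
        also have "\<dots> = m * exp ((a - 1) * Ent / m * (1 / a))"
          using mp a0 by (simp add: powr_powr exp_powr_real)
        also have "(a - 1) * Ent / m * (1 / a) = - c * Ent / m"
          using a0 q q0 mp by (simp add: a_def c_def field_simps)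
        finally show ?thesis by simp
      qed
      ultimately have b2: "m * exp (- c * Ent / m) \<le> 1" by simp
      have "m - E \<le> m * exp (- c * Ent / m)"
      proof (cases "Ent \<le> 0")
        case True
        then have "c * Ent \<le> 0" using c0 by (simp add: mult_nonneg_nonpos)
        then have "c * Ent / m \<le> 0" using mp by (simp add: divide_nonpos_pos)
        then have "1 \<le> exp (- c * Ent / m)" by simp
        then show ?thesis using mp E0 by (smt (verit) mult_le_cancel_left1)
      next
        case False
        then have A: "?l * Ent \<le> E" unfolding E_def Ent_def by (intro LS[OF mk pm pos]) (simp add: Ent_def)
        have B: "c * Ent \<le> ?l * Ent" using cl False by (simp add: mult_right_mono)
        have "1 + (- c * Ent / m) \<le> exp (- c * Ent / m)" by (rule exp_ge_add_one_self)
        then have C1: "m * (1 + (- c * Ent / m)) \<le> m * exp (- c * Ent / m)" using mp by simp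
        have C2: "m * (1 + (- c * Ent / m)) = m - c * Ent" using mp by (simp add: field_simps)
        have C: "m - c * Ent \<le> m * exp (- c * Ent / m)" using C1 C2 by simp
        from A B C show ?thesis by linarith
      qed
      then show ?thesis using b2 by linarith
    qed
    finally show ?thesis .
  qed
qed

theorem proposition4p1:
  fixes K :: "'v::finite \<Rightarrow> 'v \<Rightarrow> real" and \<mu> :: "'v \<Rightarrow> real" and q0 q :: real
  assumes "markov_kernel K"
    and "prob_measure_fin \<mu>"
    and "\<forall>y. push_measure \<mu> K y > 0"
    and "q0 \<ge> 2"
    and "0 < q"
    and "q \<le> (1 + log_sobolev_const (P_kernel K \<mu>) (push_measure \<mu> K)) * q0"
  shows "op_norm K q0 (push_measure \<mu> K) q \<mu> \<le> 1"
proof -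
  let ?m = "push_measure \<mu> K"
  let ?S = "{lp_norm q \<mu> (kernel_apply K f) | f. lp_norm q0 ?m f \<le> 1}"
  have mn: "\<forall>x. 0 \<le> ?m x" using assms(3) less_imp_le by blast
  have mu0: "\<forall>x. 0 \<le> \<mu> x" using assms(2) by (auto simp: prob_measure_fin_def)
  have ne: "?S \<noteq> {}"
  proof -
    have "lp_norm q0 ?m (\<lambda>_. 0) \<le> 1" by (simp add: lp_norm_def)
    then show ?thesis by blast
  qed
  have "z \<le> 1" if "z \<in> ?S" for z
  proof -
    obtain f where z: "z = lp_norm q \<mu> (kernel_apply K f)" and f: "lp_norm q0 ?m f \<le> 1"
      using \<open>z \<in> ?S\<close> by blast
    define Sf where "Sf = (\<Sum>y\<in>UNIV. \<bar>f y\<bar> powr q0 * ?m y)"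
    have Sf0: "0 \<le> Sf" unfolding Sf_def using mn by (auto intro: sum_nonneg)
    have "Sf = (Sf powr (1 / q0)) powr q0" using assms(4) Sf0 by (simp add: powr_powr)
    also have "\<dots> \<le> 1 powr q0"
      by (rule powr_mono2) (use f assms(4) Sf0 in \<open>auto simp: lp_norm_def Sf_def\<close>)
    finally have "Sf \<le> 1" by simp
    then have T: "(\<Sum>x\<in>UNIV. \<bar>kernel_apply K f x\<bar> powr q * \<mu> x) \<le> 1"
      using key_bound[OF assms] Sf_def by blast
    have T0: "0 \<le> (\<Sum>x\<in>UNIV. \<bar>kernel_apply K f x\<bar> powr q * \<mu> x)"
      using mu0 by (auto intro: sum_nonneg)
    have "z \<le> 1 powr (1 / q)" unfolding z lp_norm_def
      by (rule powr_mono2) (use T T0 assms(5) in auto)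
    then show ?thesis by simp
  qed
  then show ?thesis unfolding op_norm_def using ne by (intro cSup_least) auto
qed

end
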